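(* Let $\mathbf{x}\in\mathbb{R}^p$ be an observation with outcome $y\in\mathcal{Y}$, and $\lambda\ge 0$. Consider a generative density $p_\theta(\mathbf{x},\mathbf{s})$ with latent $\mathbf{s}\in\mathbb{R}^L$, a predictive model $p_\psi(y\mid\mathbf{s})$ and a variational encoder $q_\phi(\mathbf{s}\mid\mathbf{x})$, all infinitely differentiable in their parameters, where $\mathbf{s}\sim q_\phi(\mathbf{s}\mid\mathbf{x})$ is reparameterized as $\mathbf{s}=g_\phi(\epsilon,\mathbf{x})$ with $\epsilon\sim p(\epsilon)$ independent of $\phi,\mathbf{x}$, and gradients may be interchanged with expectations over $p(\epsilon)$. Consider the constrained problem $$\max_{\psi,\theta,\phi}\ \mathbb{E}_{q_\phi(\mathbf{s}\mid\mathbf{x})}\bigl[\log p_\theta(\mathbf{x},\mathbf{s})-\log q_\phi(\mathbf{s}\mid\mathbf{x})+\lambda\log p_\psi(y\mid\mathbf{s})\bigr]\quad\text{s.t.}\quad \nabla_\phi\,\mathbb{E}_{q_\phi(\mathbf{s}\mid\mathbf{x})}\bigl[\log p_\theta(\mathbf{x},\mathbf{s})-\log q_\phi(\mathbf{s}\mid\mathbf{x})\bigr]=0,$$ where, near the point of interest, the constraint determines $\phi=h(\theta)$ as a differentiable function of $\theta$ (by the implicit function theorem), and derivatives with respect to $\theta$ of terms depending on $\phi$ are taken through this dependence. Then at a stationary point of this problem: (i) $\phi$ satisfies the VAE stationarity condition $$\mathbb{E}_{p(\epsilon)}\Bigl[\nabla_\phi\bigl(\log p_\theta(\mathbf{x},g_\phi(\epsilon,\mathbf{x}))-\log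 q_\phi(g_\phi(\epsilon,\mathbf{x})\mid\mathbf{x})\bigr)\Bigr]=0;$$ (ii) $\theta$ satisfies $$\mathbb{E}_{p(\epsilon)}\bigl[\nabla_\theta\log p_\theta(\mathbf{x},g_\phi(\epsilon,\mathbf{x}))\bigr]=-\lambda\,\mathbb{E}_{p(\epsilon)}\bigl[\nabla_\theta\log p_\psi(y\mid g_\phi(\epsilon,\mathbf{x}))\bigr];$$ (iii) $\psi$, given $\phi$, satisfies the same stationarity condition as for the unconstrained supervised VAE objective, namely $\mathbb{E}_{p(\epsilon)}\bigl[\nabla_\psi\log p_\psi(y\mid g_\phi(\epsilon,\mathbf{x}))\bigr]=0$.
   Context: $\theta$ parameterizes the generative model, $\psi$ the classifier $p_\psi(y\mid\mathbf{s})$, and $\phi$ the encoder $q_\phi(\mathbf{s}\mid\mathbf{x})$ (which does not condition on $y$). The constraint (a first-order replacement of requiring $\phi$ to maximize the evidence lower bound for fixed $\theta$) forces the encoder to be a stationary point of the purely generative ELBO. In (ii), $\nabla_\theta\log p_\psi(y\mid g_\phi(\epsilon,\mathbf{x}))$ is nonzero only through the dependence $\phi=h(\theta)$ induced by the constraint. The objective is written for a single data pair $(\mathbf{x},y)$. *)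

theory Defs
  imports "HOL-Probability.Probability"
begin

definition grad :: "('a::euclidean_space \<Rightarrow> real) \<Rightarrow> 'a \<Rightarrow> 'a" where
  "grad f a = (\<Sum>b\<in>Basis. frechet_derivative f (at a) b *\<^sub>R b)"

definition grad_interchange ::
  "'e measure \<Rightarrow> ('e \<Rightarrow> 'a::euclidean_space \<Rightarrow> real) \<Rightarrow> 'a \<Rightarrow> bool" where
  "grad_interchange P f a \<longleftrightarrow>
     (\<forall>e\<in>space P. f e differentiable (at a)) \<and>
     integrable P (\<lambda>e. grad (f e) a) \<and>
     (\<lambda>u. \<integral>e. f e u \<partial>P) differentiable (at a) \<and>
     grad (\<lambda>u. \<integral>e. f e u \<partial>P) a = (\<integral>e. grad (f e) a \<partial>P)"

definition elbo ::
  "'e measure \<Rightarrow> ('t \<Rightarrow> real^'p \<Rightarrow> real^'l \<Rightarrow> real) \<Rightarrow> ('f \<Rightarrow> real^'l \<Rightarrow> real^'p \<Rightarrow> real)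
   \<Rightarrow> ('f \<Rightarrow> 'e \<Rightarrow> real^'p \<Rightarrow> real^'l) \<Rightarrow> real^'p \<Rightarrow> 't \<Rightarrow> 'f \<Rightarrow> real" where
  "elbo P p q g x \<theta> \<phi> =
     (\<integral>e. ln (p \<theta> x (g \<phi> e x)) - ln (q \<phi> (g \<phi> e x) x) \<partial>P)"

definition sup_obj ::
  "'e measure \<Rightarrow> ('t \<Rightarrow> real^'p \<Rightarrow> real^'l \<Rightarrow> real) \<Rightarrow> ('f \<Rightarrow> real^'l \<Rightarrow> real^'p \<Rightarrow> real)
   \<Rightarrow> ('w \<Rightarrow> 'y \<Rightarrow> real^'l \<Rightarrow> real) \<Rightarrow> ('f \<Rightarrow> 'e \<Rightarrow> real^'p \<Rightarrow> real^'l)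
   \<Rightarrow> real \<Rightarrow> real^'p \<Rightarrow> 'y \<Rightarrow> 't \<Rightarrow> 'f \<Rightarrow> 'w \<Rightarrow> real" where
  "sup_obj P p q py g lam x y \<theta> \<phi> \<psi> =
     (\<integral>e. ln (p \<theta> x (g \<phi> e x)) - ln (q \<phi> (g \<phi> e x) x)
            + lam * ln (py \<psi> y (g \<phi> e x)) \<partial>P)"

end

theory Submission
  imports Defs
begin

lemma grad_hd:
  assumes "(f has_derivative D) (at a)"
  shows "grad f a = (\<Sum>b\<in>Basis. D b *\<^sub>R b)"
  using frechet_derivative_at[OF assms] unfolding grad_def by simp

lemma lin_inner:
  fixes D :: "'a::euclidean_space \<Rightarrow> real"
  assumes "linear D"
  shows "D v = v \<bullet> (\<Sum>b\<in>Basis. D b *\<^sub>R b)"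
proof -
  have "D v = D (\<Sum>b\<in>Basis. (v \<bullet> b) *\<^sub>R b)" by (simp add: euclidean_representation)
  also have "\<dots> = (\<Sum>b\<in>Basis. (v \<bullet> b) * D b)"
    by (simp add: linear_sum[OF assms] linear_scale[OF assms])
  also have "\<dots> = v \<bullet> (\<Sum>b\<in>Basis. D b *\<^sub>R b)"
    by (simp add: inner_sum_right mult.commute)
  finally show ?thesis .
qed

lemma ln_der:
  fixes f :: "'a::real_normed_vector \<Rightarrow> real"
  assumes "f differentiable (at a)" "f a > 0"
  shows "(\<lambda>z. ln (f z)) differentiable (at a)"
proof -
  obtain D where "(f has_derivative D) (at a)" using assms(1) unfolding differentiable_def by blast
  from has_derivative_ln[OF assms(2) this] show ?thesis unfolding differentiable_def by blast
qed

theorem proposition2: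
  fixes P :: "'e measure"
    and p :: "'t::euclidean_space \<Rightarrow> real^'p \<Rightarrow> real^'l \<Rightarrow> real"
    and q :: "'f::euclidean_space \<Rightarrow> real^'l \<Rightarrow> real^'p \<Rightarrow> real"
    and py :: "'w::euclidean_space \<Rightarrow> 'y \<Rightarrow> real^'l \<Rightarrow> real"
    and g :: "'f \<Rightarrow> 'e \<Rightarrow> real^'p \<Rightarrow> real^'l"
    and h :: "'t \<Rightarrow> 'f"
    and x :: "real^'p" and y :: 'y and lam :: real
    and \<theta>0 :: 't and \<phi>0 :: 'f and \<psi>0 :: 'w
    and U :: "'t set" and V :: "'f set"
  assumes P: "prob_space P"
    and lam: "lam \<ge> 0"
    \<comment> \<open>positive densities\<close>
    and p_pos: "\<And>\<theta> s. p \<theta> x s > 0"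
    and q_pos: "\<And>\<phi> s. q \<phi> s x > 0"
    and py_pos: "\<And>\<psi> s. py \<psi> y s > 0"
    \<comment> \<open>differentiability of the models and of the reparameterisation\<close>
    and p_diff: "\<And>\<theta> s. (\<lambda>(\<theta>', s'). p \<theta>' x s') differentiable (at (\<theta>, s))"
    and q_diff: "\<And>\<phi> s. (\<lambda>(\<phi>', s'). q \<phi>' s' x) differentiable (at (\<phi>, s))"
    and py_diff: "\<And>\<psi> s. (\<lambda>(\<psi>', s'). py \<psi>' y s') differentiable (at (\<psi>, s))"
    and g_diff: "\<And>e \<phi>. (\<lambda>\<phi>'. g \<phi>' e x) differentiable (at \<phi>)"
    \<comment> \<open>the constraint determines phi = h theta near (theta0, phi0)\<close>
    and U: "open U" "\<theta>0 \<in> U" and V: "open V" "\<phi>0 \<in> V"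
    and hUV: "h ` U \<subseteq> V"
    and h_diff: "h differentiable_on U"
    and h0: "\<phi>0 = h \<theta>0"
    and constraint_iff: "\<And>\<theta> \<phi>. \<theta> \<in> U \<Longrightarrow> \<phi> \<in> V \<Longrightarrow>
           (grad (elbo P p q g x \<theta>) \<phi> = 0 \<longleftrightarrow> \<phi> = h \<theta>)"
    \<comment> \<open>gradients may be interchanged with expectations over the noise\<close>
    and ic_phi: "grad_interchange P
           (\<lambda>e \<phi>. ln (p \<theta>0 x (g \<phi> e x)) - ln (q \<phi> (g \<phi> e x) x)) \<phi>0"
    and ic_theta_obj: "grad_interchange P
           (\<lambda>e \<theta>. ln (p \<theta> x (g (h \<theta>) e x)) - ln (q (h \<theta>) (g (h \<theta>) e x) x)
                  + lam * ln (py \<psi>0 y (g (h \<theta>) e x))) \<theta>0"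
    and ic_theta_p: "grad_interchange P (\<lambda>e \<theta>. ln (p \<theta> x (g \<phi>0 e x))) \<theta>0"
    and ic_theta_py: "grad_interchange P (\<lambda>e \<theta>. ln (py \<psi>0 y (g (h \<theta>) e x))) \<theta>0"
    and ic_psi_obj: "grad_interchange P
           (\<lambda>e \<psi>. ln (p \<theta>0 x (g \<phi>0 e x)) - ln (q \<phi>0 (g \<phi>0 e x) x)
                  + lam * ln (py \<psi> y (g \<phi>0 e x))) \<psi>0"
    \<comment> \<open>stationary point of the constrained problem (phi eliminated via phi = h theta)\<close>
    and stat_theta: "grad (\<lambda>\<theta>. sup_obj P p q py g lam x y \<theta> (h \<theta>) \<psi>0) \<theta>0 = 0"
    and stat_psi: "grad (\<lambda>\<psi>. sup_obj P p q py g lam x y \<theta>0 \<phi>0 \<psi>) \<psi>0 = 0"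
  shows "(\<integral>e. grad (\<lambda>\<phi>. ln (p \<theta>0 x (g \<phi> e x)) - ln (q \<phi> (g \<phi> e x) x)) \<phi>0 \<partial>P) = 0
       \<and> (\<integral>e. grad (\<lambda>\<theta>. ln (p \<theta> x (g \<phi>0 e x))) \<theta>0 \<partial>P)
           = - (lam *\<^sub>R (\<integral>e. grad (\<lambda>\<theta>. ln (py \<psi>0 y (g (h \<theta>) e x))) \<theta>0 \<partial>P))
       \<and> lam *\<^sub>R (\<integral>e. grad (\<lambda>\<psi>. ln (py \<psi> y (g \<phi>0 e x))) \<psi>0 \<partial>P) = 0"
proof -
  have ldiff: "\<And>F D z. ((\<lambda>(a,b). F a b) has_derivative D) (at z) \<Longrightarrow> (\<lambda>(a,b). F a b) z > (0::real) \<Longrightarrow>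
      ((\<lambda>w. ln ((\<lambda>(a,b). F a b) w)) has_derivative (\<lambda>d. D d * inverse ((\<lambda>(a,b). F a b) z))) (at z)"
    by (rule has_derivative_ln)
  define Dh where "Dh = frechet_derivative h (at \<theta>0)"
  have hder: "(h has_derivative Dh) (at \<theta>0)"
    using h_diff U differentiable_on_eq_differentiable_at frechet_derivative_works Dh_def by blast
  have hder': "(h has_derivative Dh) (at \<theta>0 within UNIV)" using hder by simp
  have e1: "elbo P p q g x \<theta>0 = (\<lambda>u. \<integral>e. ln (p \<theta>0 x (g u e x)) - ln (q u (g u e x) x) \<partial>P)"
    by (rule ext) (simp add: elbo_def)
  have part1: "(\<integral>e. grad (\<lambda>\<phi>. ln (p \<theta>0 x (g \<phi> e x)) - ln (q \<phi> (g \<phi> e x) x)) \<phi>0 \<partial>P) = 0"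
  proof -
    have "grad (elbo P p q g x \<theta>0) \<phi>0 = 0" using constraint_iff[OF U(2) V(2)] h0 by simp
    then show ?thesis using ic_phi unfolding grad_interchange_def e1 by simp
  qed
  have pt3: "grad (\<lambda>\<psi>. ln (p \<theta>0 x (g \<phi>0 e x)) - ln (q \<phi>0 (g \<phi>0 e x) x) + lam * ln (py \<psi> y (g \<phi>0 e x))) \<psi>0
      = lam *\<^sub>R grad (\<lambda>\<psi>. ln (py \<psi> y (g \<phi>0 e x))) \<psi>0" for e
  proof -
    obtain D where D: "((\<lambda>(a,b). py a y b) has_derivative D) (at (\<psi>0, g \<phi>0 e x))"
      using py_diff unfolding differentiable_def by blast
    have pr: "((\<lambda>\<psi>. (\<psi>, g \<phi>0 e x)) has_derivative (\<lambda>d. (d, 0))) (at \<psi>0)"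
      by (intro has_derivative_Pair has_derivative_ident has_derivative_const)
    have "((\<lambda>\<psi>. ln ((\<lambda>(a,b). py a y b) (\<psi>, g \<phi>0 e x))) has_derivative
        (\<lambda>d. D (d,0) * inverse ((\<lambda>(a,b). py a y b) (\<psi>0, g \<phi>0 e x)))) (at \<psi>0)"
      using has_derivative_compose[OF pr ldiff[OF D]] py_pos by simp
    then have K: "((\<lambda>\<psi>. ln (py \<psi> y (g \<phi>0 e x))) has_derivative
        (\<lambda>d. D (d,0) * inverse (py \<psi>0 y (g \<phi>0 e x)))) (at \<psi>0)" by simp
    have K2: "((\<lambda>\<psi>. ln (p \<theta>0 x (g \<phi>0 e x)) - ln (q \<phi>0 (g \<phi>0 e x) x) + lam * ln (py \<psi> y (g \<phi>0 e x)))
        has_derivative (\<lambda>d. lam * (D (d,0) * inverse (py \<psi>0 y (g \<phi>0 e x))))) (at \<psi>0)"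
      using has_derivative_add[OF has_derivative_const has_derivative_mult_right[OF K, of lam]] by simp
    show ?thesis unfolding grad_hd[OF K] grad_hd[OF K2]
      by (simp add: scaleR_sum_right)
  qed
  have part3: "lam *\<^sub>R (\<integral>e. grad (\<lambda>\<psi>. ln (py \<psi> y (g \<phi>0 e x))) \<psi>0 \<partial>P) = 0"
  proof -
    have e3: "(\<lambda>\<psi>. sup_obj P p q py g lam x y \<theta>0 \<phi>0 \<psi>) = (\<lambda>u. \<integral>e. ln (p \<theta>0 x (g \<phi>0 e x)) - ln (q \<phi>0 (g \<phi>0 e x) x)
                  + lam * ln (py u y (g \<phi>0 e x)) \<partial>P)"
      by (rule ext) (simp add: sup_obj_def)
    have "0 = (\<integral>e. grad (\<lambda>\<psi>. ln (p \<theta>0 x (g \<phi>0 e x)) - ln (q \<phi>0 (g \<phi>0 e x) x)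
                  + lam * ln (py \<psi> y (g \<phi>0 e x))) \<psi>0 \<partial>P)"
      using stat_psi ic_psi_obj unfolding grad_interchange_def e3 by simp
    also have "\<dots> = (\<integral>e. lam *\<^sub>R grad (\<lambda>\<psi>. ln (py \<psi> y (g \<phi>0 e x))) \<psi>0 \<partial>P)"
      by (simp only: pt3)
    finally show ?thesis by simp
  qed
  have pt2: "grad (\<lambda>\<theta>. ln (p \<theta> x (g (h \<theta>) e x)) - ln (q (h \<theta>) (g (h \<theta>) e x) x)
                  + lam * ln (py \<psi>0 y (g (h \<theta>) e x))) \<theta>0
     = grad (\<lambda>\<theta>. ln (p \<theta> x (g \<phi>0 e x))) \<theta>0
       + (\<Sum>b\<in>Basis. (grad (\<lambda>\<phi>. ln (p \<theta>0 x (g \<phi> e x)) - ln (q \<phi> (g \<phi> e x) x)) \<phi>0 \<bullet> Dh b) *\<^sub>R b)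
       + lam *\<^sub>R grad (\<lambda>\<theta>. ln (py \<psi>0 y (g (h \<theta>) e x))) \<theta>0" for e
  proof -
    obtain DP where DP: "((\<lambda>(a,b). p a x b) has_derivative DP) (at (\<theta>0, g \<phi>0 e x))"
      using p_diff unfolding differentiable_def by blast
    obtain DQq where DQq: "((\<lambda>(a,b). q a b x) has_derivative DQq) (at (\<phi>0, g \<phi>0 e x))"
      using q_diff unfolding differentiable_def by blast
    obtain DY where DY: "((\<lambda>(a,b). py a y b) has_derivative DY) (at (\<psi>0, g \<phi>0 e x))"
      using py_diff unfolding differentiable_def by blast
    obtain Dg where gder: "((\<lambda>\<phi>. g \<phi> e x) has_derivative Dg) (at \<phi>0)"
      using g_diff unfolding differentiable_def by blast
    define DL where "DL = (\<lambda>d. DP d * inverse (p \<theta>0 x (g \<phi>0 e x)))"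
    define DQ where "DQ = (\<lambda>d. DQq d * inverse (q \<phi>0 (g \<phi>0 e x) x))"
    define DR where "DR = (\<lambda>d. DY d * inverse (py \<psi>0 y (g \<phi>0 e x)))"
    have L: "((\<lambda>w. ln ((\<lambda>(a,b). p a x b) w)) has_derivative DL) (at (\<theta>0, g \<phi>0 e x))"
      using ldiff[OF DP] p_pos unfolding DL_def by simp
    have Q: "((\<lambda>w. ln ((\<lambda>(a,b). q a b x) w)) has_derivative DQ) (at (\<phi>0, g \<phi>0 e x))"
      using ldiff[OF DQq] q_pos unfolding DQ_def by simp
    have R: "((\<lambda>w. ln ((\<lambda>(a,b). py a y b) w)) has_derivative DR) (at (\<psi>0, g \<phi>0 e x))"
      using ldiff[OF DY] py_pos unfolding DR_def by simp
    have linL: "linear DL" using has_derivative_linear[OF L] .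
    have linQ: "linear DQ" using has_derivative_linear[OF Q] .
    have gder': "((\<lambda>\<phi>. g \<phi> e x) has_derivative Dg) (at (h \<theta>0))" using gder h0 by simp
    have gh: "((\<lambda>\<theta>. g (h \<theta>) e x) has_derivative (\<lambda>d. Dg (Dh d))) (at \<theta>0)"
      using has_derivative_compose[OF hder' gder'] by simp
    have L': "((\<lambda>w. ln ((\<lambda>(a,b). p a x b) w)) has_derivative DL) (at (\<theta>0, g (h \<theta>0) e x))"
      using L h0 by simp
    have Q': "((\<lambda>w. ln ((\<lambda>(a,b). q a b x) w)) has_derivative DQ) (at (h \<theta>0, g (h \<theta>0) e x))"
      using Q h0 by simp
    have R': "((\<lambda>w. ln ((\<lambda>(a,b). py a y b) w)) has_derivative DR) (at (\<psi>0, g (h \<theta>0) e x))"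
      using R h0 by simp
    have f1: "((\<lambda>\<theta>. ln (p \<theta> x (g (h \<theta>) e x))) has_derivative (\<lambda>d. DL (d, Dg (Dh d)))) (at \<theta>0)"
      using has_derivative_compose[OF has_derivative_Pair[OF has_derivative_ident gh] L'] by simp
    have f2: "((\<lambda>\<theta>. ln (q (h \<theta>) (g (h \<theta>) e x) x)) has_derivative (\<lambda>d. DQ (Dh d, Dg (Dh d)))) (at \<theta>0)"
      using has_derivative_compose[OF has_derivative_Pair[OF hder' gh] Q'] by simp
    have f3: "((\<lambda>\<theta>. ln (py \<psi>0 y (g (h \<theta>) e x))) has_derivative (\<lambda>d. DR (0, Dg (Dh d)))) (at \<theta>0)"
      using has_derivative_compose[OF has_derivative_Pair[OF has_derivative_const gh] R'] by simp
    have f: "((\<lambda>\<theta>. ln (p \<theta> x (g (h \<theta>) e x)) - ln (q (h \<theta>) (g (h \<theta>) e x) x)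
                  + lam * ln (py \<psi>0 y (g (h \<theta>) e x))) has_derivative
         (\<lambda>d. DL (d, Dg (Dh d)) - DQ (Dh d, Dg (Dh d)) + lam * DR (0, Dg (Dh d)))) (at \<theta>0)"
      by (intro has_derivative_add has_derivative_diff f1 f2 has_derivative_mult_right f3)
    have G1: "((\<lambda>\<theta>. ln (p \<theta> x (g \<phi>0 e x))) has_derivative (\<lambda>d. DL (d, 0))) (at \<theta>0)"
      using has_derivative_compose[OF has_derivative_Pair[OF has_derivative_ident has_derivative_const] L] by simp
    have F1: "((\<lambda>\<phi>. ln (p \<theta>0 x (g \<phi> e x))) has_derivative (\<lambda>d. DL (0, Dg d))) (at \<phi>0)"
      using has_derivative_compose[OF has_derivative_Pair[OF has_derivative_const gder] L] by simp
    have F2: "((\<lambda>\<phi>. ln (q \<phi> (g \<phi> e x) x)) has_derivative (\<lambda>d. DQ (d, Dg d))) (at \<phi>0)"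
      using has_derivative_compose[OF has_derivative_Pair[OF has_derivative_ident gder] Q] by simp
    have F: "((\<lambda>\<phi>. ln (p \<theta>0 x (g \<phi> e x)) - ln (q \<phi> (g \<phi> e x) x)) has_derivative
         (\<lambda>d. DL (0, Dg d) - DQ (d, Dg d))) (at \<phi>0)"
      by (intro has_derivative_diff F1 F2)
    have inF: "grad (\<lambda>\<phi>. ln (p \<theta>0 x (g \<phi> e x)) - ln (q \<phi> (g \<phi> e x) x)) \<phi>0 \<bullet> v
        = DL (0, Dg v) - DQ (v, Dg v)" for v
      unfolding grad_hd[OF F] using lin_inner[OF has_derivative_linear[OF F], of v]
      by (simp add: inner_commute)
    have split: "DL (b, w) = DL (b, 0) + DL (0, w)" for b w
      using linear_add[OF linL, of "(b,0)" "(0,w)"] by simp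
    have pw: "(DL (b, Dg (Dh b)) - DQ (Dh b, Dg (Dh b)) + lam * DR (0, Dg (Dh b))) *\<^sub>R b
       = DL (b, 0) *\<^sub>R b + (DL (0, Dg (Dh b)) - DQ (Dh b, Dg (Dh b))) *\<^sub>R b
         + lam *\<^sub>R (DR (0, Dg (Dh b)) *\<^sub>R b)" for b
      using split[of b "Dg (Dh b)"] by (simp add: algebra_simps)
    show ?thesis
      unfolding grad_hd[OF f] grad_hd[OF G1] grad_hd[OF f3] inF pw
      by (simp only: scaleR_sum_right sum.distrib)
  qed
  define G1 where "G1 = (\<lambda>e. grad (\<lambda>\<theta>. ln (p \<theta> x (g \<phi>0 e x))) \<theta>0)"
  define GF where "GF = (\<lambda>e. grad (\<lambda>\<phi>. ln (p \<theta>0 x (g \<phi> e x)) - ln (q \<phi> (g \<phi> e x) x)) \<phi>0)"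
  define G3 where "G3 = (\<lambda>e. grad (\<lambda>\<theta>. ln (py \<psi>0 y (g (h \<theta>) e x))) \<theta>0)"
  have iG1: "integrable P G1" using ic_theta_p unfolding grad_interchange_def G1_def by simp
  have iGF: "integrable P GF" using ic_phi unfolding grad_interchange_def GF_def by simp
  have iG3: "integrable P G3" using ic_theta_py unfolding grad_interchange_def G3_def by simp
  have iG2: "integrable P (\<lambda>e. \<Sum>b\<in>Basis. (GF e \<bullet> Dh b) *\<^sub>R b)"
    using iGF Bochner_Integration.integrable_sum[where I=Basis and M=P and f="\<lambda>b e. (GF e \<bullet> Dh b) *\<^sub>R b"] by auto
  have IGF: "integral\<^sup>L P GF = 0" using part1 unfolding GF_def .
  have I2: "(\<integral>e. (\<Sum>b\<in>Basis. (GF e \<bullet> Dh b) *\<^sub>R b) \<partial>P) = 0"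
  proof -
    have "(\<integral>e. (\<Sum>b\<in>Basis. (GF e \<bullet> Dh b) *\<^sub>R b) \<partial>P) = (\<Sum>b\<in>Basis. (\<integral>e. (GF e \<bullet> Dh b) *\<^sub>R b \<partial>P))"
      using iGF Bochner_Integration.integral_sum[where I=Basis and M=P and f="\<lambda>b e. (GF e \<bullet> Dh b) *\<^sub>R b"] by auto
    also have "\<dots> = (\<Sum>b\<in>Basis. (integral\<^sup>L P GF \<bullet> Dh b) *\<^sub>R b)"
      using iGF by simp
    finally show ?thesis using IGF by simp
  qed
  have e2: "(\<lambda>\<theta>. sup_obj P p q py g lam x y \<theta> (h \<theta>) \<psi>0) = (\<lambda>u. \<integral>e. ln (p u x (g (h u) e x)) - ln (q (h u) (g (h u) e x) x)
                  + lam * ln (py \<psi>0 y (g (h u) e x)) \<partial>P)"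
    by (rule ext) (simp add: sup_obj_def)
  have "0 = (\<integral>e. grad (\<lambda>\<theta>. ln (p \<theta> x (g (h \<theta>) e x)) - ln (q (h \<theta>) (g (h \<theta>) e x) x)
                  + lam * ln (py \<psi>0 y (g (h \<theta>) e x))) \<theta>0 \<partial>P)"
    using stat_theta ic_theta_obj unfolding grad_interchange_def e2 by simp
  also have "\<dots> = (\<integral>e. G1 e + (\<Sum>b\<in>Basis. (GF e \<bullet> Dh b) *\<^sub>R b) + lam *\<^sub>R G3 e \<partial>P)"
    unfolding G1_def GF_def G3_def by (simp only: pt2)
  also have "\<dots> = integral\<^sup>L P G1 + (\<integral>e. (\<Sum>b\<in>Basis. (GF e \<bullet> Dh b) *\<^sub>R b) \<partial>P) + lam *\<^sub>R integral\<^sup>L P G3"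
    using iG1 iG2 iG3 by (simp add: integral_add)
  finally have part2: "integral\<^sup>L P G1 = - (lam *\<^sub>R integral\<^sup>L P G3)"
    using I2 by (simp add: eq_neg_iff_add_eq_0)
  show ?thesis using part1 part2 part3 unfolding G1_def G3_def by simp
qed

end
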